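(* Let $X$ be a real Hilbert space and let $A,B$ be closed convex nonempty subsets of $X$ such that $A\cap B$ is bounded and nonempty. Suppose the couple $(A,B)$ is regular. Then for every choice of sequences $\{A_n\},\{B_n\}$ of closed convex nonempty subsets of $X$ converging in the Attouch–Wets sense to $A$ and $B$ respectively, and every $a_0\in X$, the perturbed alternating projections sequences $\{a_n\},\{b_n\}$ satisfy $\mathrm{dist}(a_n,A\cap B)\to0$ and $\mathrm{dist}(b_n,A\cap B)\to0$.
   Context: $P_C$ is the metric projection onto a closed convex nonempty set $C$; $B_X$ the closed unit ball; $\mathrm{dist}(x,S)=\inf_{s\in S}\|x-s\|$. Since $A\cap B\neq\emptyset$, regularity of $(A,B)$ means: for each $\epsilon>0$ there is $\delta>0$ such that $\mathrm{dist}(x,A\cap B)\le\epsilon$ whenever $x\in X$ and $\max\{\mathrm{dist}(x,A),\mathrm{dist}(x,B)\}\le\delta$. Attouch–Wets convergence: for nonempty closed $C,D$ and $N\in\mathbb N$ let $e_N(C,D)=\sup_{c\in C\cap NB_X}\mathrm{dist}(c,D)$ ($0$ if $C\cap NB_X=\emptyset$) and $h_N(C,D)=\max\{e_N(C,D),e_N(D,C)\}$; $C_j\to C$ if $\lim_j h_N(C_j,C)=0$ for every $N\in\mathbb N$. The perturbed alternating projections sequences with starting point $a_0$ are defined by $b_n=P_{B_n}(a_{n-1})$ and $a_n=P_{A_n}(b_n)$ for $n\in\mathbb N$. *)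

theory Defs
  imports "HOL-Analysis.Analysis"
begin

text \<open>Metric projection onto a set (in a real Hilbert space, for closed convex nonempty C
  the nearest point exists and is unique, so this picks it).\<close>
definition metric_proj :: "'a::real_inner set \<Rightarrow> 'a \<Rightarrow> 'a" where
  "metric_proj C x = (SOME p. p \<in> C \<and> (\<forall>y\<in>C. dist x p \<le> dist x y))"

definition regular_couple :: "'a::real_normed_vector set \<Rightarrow> 'a set \<Rightarrow> bool" where
  "regular_couple A B \<longleftrightarrow>
     (\<forall>\<epsilon>>0. \<exists>\<delta>>0. \<forall>x. max (infdist x A) (infdist x B) \<le> \<delta> \<longrightarrow> infdist x (A \<inter> B) \<le> \<epsilon>)"

definition aw_excess :: "nat \<Rightarrow> 'a::real_normed_vector set \<Rightarrow> 'a set \<Rightarrow> real" where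
  "aw_excess N C D =
     (if C \<inter> cball 0 (real N) = {} then 0
      else (SUP c \<in> C \<inter> cball 0 (real N). infdist c D))"

definition aw_dist :: "nat \<Rightarrow> 'a::real_normed_vector set \<Rightarrow> 'a set \<Rightarrow> real" where
  "aw_dist N C D = max (aw_excess N C D) (aw_excess N D C)"

definition aw_converges :: "(nat \<Rightarrow> 'a::real_normed_vector set) \<Rightarrow> 'a set \<Rightarrow> bool" where
  "aw_converges Cs C \<longleftrightarrow> (\<forall>N::nat. N \<ge> 1 \<longrightarrow> (\<lambda>j. aw_dist N (Cs j) C) \<longlonglongrightarrow> 0)"

end

theory Submission
  imports Defs "HOL-Analysis.Analysis"
begin


lemma infdist_approx:
  assumes "S \<noteq> {}" "infdist x S < e"
  shows "\<exists>y\<in>S. dist x y < e"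
proof (rule ccontr)
  assume "\<not> ?thesis"
  then have "\<forall>y\<in>S. e \<le> dist x y" by (auto simp: not_less)
  then have "e \<le> infdist x S" using assms(1) unfolding infdist_def
    by (auto intro: cINF_greatest)
  then show False using assms(2) by simp
qed

lemma parallelogram_real:
  fixes a b :: "'a::real_inner"
  shows "(norm (a + b))\<^sup>2 + (norm (a - b))\<^sup>2 = 2 * (norm a)\<^sup>2 + 2 * (norm b)\<^sup>2"
  by (simp add: power2_norm_eq_inner inner_add_left inner_add_right inner_diff_left inner_diff_right inner_commute)

lemma hilbert_proj_exists:
  fixes x :: "'a::{real_inner,complete_space}"
  assumes "closed S" "convex S" "S \<noteq> {}"
  shows "\<exists>p\<in>S. \<forall>y\<in>S. dist x p \<le> dist x y"
proof -
  define d where "d = infdist x S"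
  have d0: "0 \<le> d" unfolding d_def by (rule infdist_nonneg)
  have "\<forall>n::nat. \<exists>y\<in>S. dist x y < d + 1 / (real n + 1)"
    using infdist_approx[OF assms(3)] unfolding d_def
    by (metis add_strict_increasing2 divide_pos_pos less_add_same_cancel1 of_nat_0_le_iff zero_less_one)
  then obtain s where s: "\<And>n. s n \<in> S" "\<And>n. dist x (s n) < d + 1 / (real n + 1)"
    by metis
  have dle: "\<And>y. y \<in> S \<Longrightarrow> d \<le> dist x y" unfolding d_def by (rule infdist_le)
  have key: "(norm (s m - s n))\<^sup>2 \<le> (8 * d + 4) / (real M + 1)"
    if "m \<ge> M" "n \<ge> M" for m n M
  proof -
    let ?e = "1 / (real M + 1)"
    have e0: "0 < ?e" "?e \<le> 1" by auto
    have "1 / (real m + 1) \<le> ?e" "1 / (real n + 1) \<le> ?e"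
      using that by (auto intro!: divide_left_mono)
    then have em: "dist x (s m) < d + ?e" and en: "dist x (s n) < d + ?e"
      using s(2)[of m] s(2)[of n] by linarith+
    have mid: "(1/2) *\<^sub>R s m + (1/2) *\<^sub>R s n \<in> S"
      using convexD[OF assms(2) s(1)[of m] s(1)[of n], of "1/2" "1/2"] by simp
    have dmid: "d \<le> norm ((x - s m) + (x - s n)) / 2"
    proof -
      have "(x - s m) + (x - s n) = 2 *\<^sub>R (x - ((1/2) *\<^sub>R s m + (1/2) *\<^sub>R s n))"
        by (simp add: algebra_simps scaleR_2)
      then have "norm ((x - s m) + (x - s n)) = 2 * dist x ((1/2) *\<^sub>R s m + (1/2) *\<^sub>R s n)"
        by (simp add: dist_norm)
      then show ?thesis using dle[OF mid] by simp
    qed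
    have par: "(norm ((x - s m) + (x - s n)))\<^sup>2 + (norm (s m - s n))\<^sup>2
        = 2 * (dist x (s m))\<^sup>2 + 2 * (dist x (s n))\<^sup>2"
      using parallelogram_real[of "x - s m" "x - s n"] norm_minus_commute[of "s m" "s n"]
      by (simp add: dist_norm)
    have "(2*d)\<^sup>2 \<le> (norm ((x - s m) + (x - s n)))\<^sup>2"
      using dmid d0 by (intro power_mono) auto
    moreover have "(dist x (s m))\<^sup>2 \<le> (d + ?e)\<^sup>2" using em by (intro power_mono) auto
    moreover have "(dist x (s n))\<^sup>2 \<le> (d + ?e)\<^sup>2" using en by (intro power_mono) auto
    ultimately have "(norm (s m - s n))\<^sup>2 \<le> 4 * (d + ?e)\<^sup>2 - 4 * d\<^sup>2"
      using par by (simp add: power_mult_distrib)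
    also have "\<dots> = 8 * d * ?e + 4 * ?e * ?e" by (simp add: power2_eq_square algebra_simps)
    also have "\<dots> \<le> 8 * d * ?e + 4 * ?e" using e0 mult_left_le_one_le[of ?e ?e] by simp
    also have "\<dots> = (8 * d + 4) / (real M + 1)" by (simp add: add_divide_distrib)
    finally show ?thesis .
  qed
  have "Cauchy s"
  proof (rule CauchyI)
    fix e :: real assume e: "0 < e"
    have e2: "0 < e\<^sup>2" using e by simp
    obtain M :: nat where M: "(8 * d + 4) / (e\<^sup>2) < real M"
      using reals_Archimedean2 by blast
    have "8 * d + 4 < real M * e\<^sup>2" using M e2 by (simp add: pos_divide_less_eq)
    moreover have "real M * e\<^sup>2 < e\<^sup>2 * (real M + 1)"
      using mult_strict_right_mono[OF _ e2, of "real M" "real M + 1"] by (simp add: mult.commute)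
    ultimately have "8 * d + 4 < e\<^sup>2 * (real M + 1)" by linarith
    then have K: "(8 * d + 4) / (real M + 1) < e\<^sup>2" by (simp add: pos_divide_less_eq)
    have "norm (s m - s n) < e" if "m \<ge> M" "n \<ge> M" for m n
    proof -
      have "(norm (s m - s n))\<^sup>2 < e\<^sup>2" using key[OF that] K by linarith
      then show ?thesis using e power2_less_imp_less[of "norm (s m - s n)" e] by simp
    qed
    then have "\<forall>m\<ge>M. \<forall>n\<ge>M. norm (s m - s n) < e" by blast
    then show "\<exists>M. \<forall>m\<ge>M. \<forall>n\<ge>M. norm (s m - s n) < e" by blast
  qed
  then obtain p where p: "s \<longlonglongrightarrow> p" using Cauchy_convergent_iff convergent_def by blast
  have pS: "p \<in> S" using closed_sequentially[OF assms(1) _ p] s(1) by auto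
  have "dist x p \<le> d"
  proof (rule LIMSEQ_le)
    show "(\<lambda>n. dist x (s n)) \<longlonglongrightarrow> dist x p" by (intro tendsto_intros p)
    show "(\<lambda>n. d + 1 / (real n + 1)) \<longlonglongrightarrow> d"
      using tendsto_add[OF tendsto_const LIMSEQ_inverse_real_of_nat, of d]
      by (simp add: inverse_eq_divide add.commute)
    show "\<exists>N. \<forall>n\<ge>N. dist x (s n) \<le> d + 1 / (real n + 1)" using s(2) less_imp_le by blast
  qed
  then show ?thesis using pS dle by (metis order_trans)
qed

lemma metric_proj:
  fixes x :: "'a::{real_inner,complete_space}"
  assumes "closed S" "convex S" "S \<noteq> {}"
  shows "metric_proj S x \<in> S" "\<And>y. y \<in> S \<Longrightarrow> dist x (metric_proj S x) \<le> dist x y"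
proof -
  have "metric_proj S x \<in> S \<and> (\<forall>y\<in>S. dist x (metric_proj S x) \<le> dist x y)"
    unfolding metric_proj_def by (rule someI_ex) (use hilbert_proj_exists[OF assms] in blast)
  then show "metric_proj S x \<in> S" "\<And>y. y \<in> S \<Longrightarrow> dist x (metric_proj S x) \<le> dist x y" by auto
qed

lemma metric_proj_firm:
  fixes x :: "'a::{real_inner,complete_space}"
  assumes "closed S" "convex S" "S \<noteq> {}" "y \<in> S"
  shows "(norm (metric_proj S x - y))\<^sup>2 + (norm (x - metric_proj S x))\<^sup>2 \<le> (norm (x - y))\<^sup>2"
proof -
  let ?p = "metric_proj S x"
  have "inner (x - ?p) (y - ?p) \<le> 0"
    using any_closest_point_dot[OF assms(2,1) metric_proj(1)[OF assms(1-3)] assms(4)]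
      metric_proj(2)[OF assms(1-3)] by blast
  moreover have "x - y = (x - ?p) - (y - ?p)" by simp
  ultimately show ?thesis
    by (simp add: power2_norm_eq_inner inner_diff_left inner_diff_right inner_commute)
qed

lemma metric_proj_nonexp:
  fixes x :: "'a::{real_inner,complete_space}"
  assumes "closed S" "convex S" "S \<noteq> {}" "y \<in> S"
  shows "norm (metric_proj S x - y) \<le> norm (x - y)"
proof -
  have "(norm (metric_proj S x - y))\<^sup>2 \<le> (norm (x - y))\<^sup>2"
    using metric_proj_firm[OF assms, of x] zero_le_power2[of "norm (x - metric_proj S x)"] by linarith
  then show ?thesis using power2_le_imp_le by simp
qed



lemma excess_bound:
  fixes S T :: "'a::real_normed_vector set"
  assumes "T \<noteq> {}" "z \<in> S" "norm z \<le> real N"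
  shows "infdist z T \<le> aw_excess N S T"
proof -
  obtain t0 where t0: "t0 \<in> T" using assms(1) by blast
  have zc: "z \<in> S \<inter> cball 0 (real N)" using assms(2,3) by (simp add: mem_cball_0)
  have "bdd_above ((\<lambda>c. infdist c T) ` (S \<inter> cball 0 (real N)))"
  proof (rule bdd_aboveI2)
    fix c assume c: "c \<in> S \<inter> cball 0 (real N)"
    have "infdist c T \<le> dist c t0" using t0 by (rule infdist_le)
    also have "\<dots> \<le> norm c + norm t0" by (simp add: dist_norm norm_triangle_ineq4)
    also have "\<dots> \<le> real N + norm t0" using c by (simp add: mem_cball_0)
    finally show "infdist c T \<le> real N + norm t0" .
  qed
  then have "infdist z T \<le> (SUP c \<in> S \<inter> cball 0 (real N). infdist c T)"
    using zc by (rule cSUP_upper2) simp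
  then show ?thesis using zc unfolding aw_excess_def by auto
qed

lemma aw_close:
  fixes S T :: "'a::real_normed_vector set"
  assumes "aw_dist N S T < \<eta>" "S \<noteq> {}" "T \<noteq> {}"
  shows "\<forall>z\<in>S. norm z \<le> real N \<longrightarrow> infdist z T \<le> \<eta>"
    and "\<forall>w\<in>T. norm w \<le> real N \<longrightarrow> (\<exists>w'\<in>S. dist w w' \<le> \<eta>)"
proof -
  show "\<forall>z\<in>S. norm z \<le> real N \<longrightarrow> infdist z T \<le> \<eta>"
    using excess_bound[OF assms(3)] assms(1) unfolding aw_dist_def
    by (meson le_less_trans less_imp_le max.cobounded1)
  show "\<forall>w\<in>T. norm w \<le> real N \<longrightarrow> (\<exists>w'\<in>S. dist w w' \<le> \<eta>)"
  proof (intro ballI impI)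
    fix w assume w: "w \<in> T" "norm w \<le> real N"
    have "infdist w S \<le> aw_excess N T S" using excess_bound[OF assms(2) w] .
    also have "\<dots> < \<eta>" using assms(1) unfolding aw_dist_def by linarith
    finally obtain w' where "w' \<in> S" "dist w w' < \<eta>" using infdist_approx[OF assms(2)] by blast
    then show "\<exists>w'\<in>S. dist w w' \<le> \<eta>" by (auto intro: less_imp_le)
  qed
qed



lemma step_near:
  fixes x p p2 :: "'a::{real_inner,complete_space}"
  assumes "closed S2" "convex S2" "S2 \<noteq> {}" "p2 \<in> S2" "norm (p2 - p) \<le> \<eta>"
  shows "norm (metric_proj S2 x - p) \<le> norm (x - p) + 2 * \<eta>"
proof -
  have "norm (metric_proj S2 x - p) \<le> norm (metric_proj S2 x - p2) + norm (p2 - p)"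
    using norm_triangle_ineq[of "metric_proj S2 x - p2" "p2 - p"] by simp
  also have "\<dots> \<le> norm (x - p2) + \<eta>" using metric_proj_nonexp[OF assms(1-4), of x] assms(5) by linarith
  also have "norm (x - p2) \<le> norm (x - p) + norm (p - p2)"
    using norm_triangle_ineq[of "x - p" "p - p2"] by simp
  finally show ?thesis using assms(5) by (simp add: norm_minus_commute)
qed

lemma step_far:
  fixes x p p1 p2 :: "'a::{real_inner,complete_space}"
  assumes S1: "convex S1" "x \<in> S1" "p1 \<in> S1"
    and S2: "closed S2" "convex S2" "S2 \<noteq> {}" "p2 \<in> S2"
    and C: "C \<noteq> {}" "\<forall>c\<in>C. norm (c - p) \<le> Dc"
    and reg: "\<forall>z. max (infdist z U) (infdist z V) \<le> \<delta> \<longrightarrow> infdist z C \<le> 1" "0 < \<delta>"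
    and cl1: "\<forall>z\<in>S1. norm z \<le> N \<longrightarrow> infdist z U \<le> \<eta>"
    and cl2: "\<forall>z\<in>S2. norm z \<le> N \<longrightarrow> infdist z V \<le> \<eta>"
    and pp: "norm (p1 - p) \<le> \<eta>" "norm (p2 - p) \<le> \<eta>"
    and N: "norm p + Dc + 5 \<le> N"
    and eta: "0 \<le> \<eta>" "\<eta> \<le> 1/4" "\<eta> \<le> \<delta>/6" "4*\<eta> \<le> (\<delta>/(2*(Dc+3)))\<^sup>2"
    and far: "Dc + 4 \<le> norm (x - p)"
  shows "norm (metric_proj S2 x - p) \<le> norm (x - p)"
proof -
  obtain c0 where "c0 \<in> C" using C(1) by blast
  then have Dc0: "0 \<le> Dc" using C(2) norm_ge_zero order_trans by blast
  define L where "L = Dc + 3"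
  define \<rho> where "\<rho> = norm (x - p)"
  define t where "t = L / \<rho>"
  define y where "y = metric_proj S2 x"
  define s where "s = norm (x - y)"
  define \<kappa> where "\<kappa> = \<delta> / (2 * L)"
  have L0: "0 < L" using Dc0 unfolding L_def by simp
  have rho: "L + 1 \<le> \<rho>" using far unfolding L_def \<rho>_def by simp
  have t0: "0 < t" "t < 1" using L0 rho unfolding t_def by (auto simp: field_simps)
  have tr: "t * \<rho> = L" using L0 rho unfolding t_def by simp
  have yS: "y \<in> S2" unfolding y_def using metric_proj(1)[OF S2(1-3)] .
  have yp2: "norm (y - p2) \<le> norm (x - p2)"
    unfolding y_def by (rule metric_proj_nonexp[OF S2])
  have xp2: "norm (x - p2) \<le> \<rho> + \<eta>"
    using norm_triangle_ineq[of "x - p" "p - p2"] pp(2) unfolding \<rho>_def by (simp add: norm_minus_commute)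
  have yp: "norm (y - p) \<le> \<rho> + 2 * \<eta>"
    using norm_triangle_ineq[of "y - p2" "p2 - p"] pp(2) yp2 xp2 by simp
  have sk: "\<kappa> * \<rho> \<le> s"
  proof (rule ccontr)
    assume "\<not> ?thesis"
    then have sl: "s < \<kappa> * \<rho>" by simp
    have ts: "t * s < \<delta> / 2"
    proof -
      have "t * s < t * (\<kappa> * \<rho>)" using sl t0 by simp
      also have "\<dots> = \<kappa> * L" using tr by (simp add: algebra_simps)
      also have "\<dots> = \<delta> / 2" unfolding \<kappa>_def using L0 by simp
      finally show ?thesis .
    qed
    define z1 where "z1 = (1 - t) *\<^sub>R p1 + t *\<^sub>R x"
    define z2 where "z2 = (1 - t) *\<^sub>R p2 + t *\<^sub>R y"
    have z1S: "z1 \<in> S1" unfolding z1_def using convexD_alt[OF S1(1,3,2), of t] t0 by simp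
    have z2S: "z2 \<in> S2" unfolding z2_def using convexD_alt[OF S2(2,4) yS, of t] t0 by simp
    have z1p: "z1 - p = (1 - t) *\<^sub>R (p1 - p) + t *\<^sub>R (x - p)" unfolding z1_def by (simp add: algebra_simps)
    have z2p: "z2 - p = (1 - t) *\<^sub>R (p2 - p) + t *\<^sub>R (y - p)" unfolding z2_def by (simp add: algebra_simps)
    have z12: "z1 - z2 = (1 - t) *\<^sub>R (p1 - p2) + t *\<^sub>R (x - y)" unfolding z1_def z2_def by (simp add: algebra_simps)
    have n1: "norm (z1 - p) \<le> (1 - t) * \<eta> + t * \<rho>"
    proof -
      have "norm (z1 - p) \<le> norm ((1 - t) *\<^sub>R (p1 - p)) + norm (t *\<^sub>R (x - p))"
        unfolding z1p by (rule norm_triangle_ineq)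
      also have "\<dots> = (1 - t) * norm (p1 - p) + t * \<rho>" using t0 unfolding \<rho>_def by simp
      also have "\<dots> \<le> (1 - t) * \<eta> + t * \<rho>" using pp(1) t0 by (simp add: mult_left_mono)
      finally show ?thesis .
    qed
    have n1': "t * \<rho> - (1 - t) * \<eta> \<le> norm (z1 - p)"
    proof -
      have "norm (t *\<^sub>R (x - p)) - norm ((1 - t) *\<^sub>R (p1 - p)) \<le> norm (z1 - p)"
        unfolding z1p using norm_diff_ineq[of "t *\<^sub>R (x - p)" "(1 - t) *\<^sub>R (p1 - p)"] by (simp add: add.commute)
      then have "t * \<rho> - (1 - t) * norm (p1 - p) \<le> norm (z1 - p)" using t0 unfolding \<rho>_def by simp
      moreover have "(1 - t) * norm (p1 - p) \<le> (1 - t) * \<eta>" using pp(1) t0 by (simp add: mult_left_mono)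
      ultimately show ?thesis by linarith
    qed
    have n2: "norm (z2 - p) \<le> (1 - t) * \<eta> + t * (\<rho> + 2 * \<eta>)"
    proof -
      have "norm (z2 - p) \<le> norm ((1 - t) *\<^sub>R (p2 - p)) + norm (t *\<^sub>R (y - p))"
        unfolding z2p by (rule norm_triangle_ineq)
      also have "\<dots> = (1 - t) * norm (p2 - p) + t * norm (y - p)" using t0 by simp
      also have "\<dots> \<le> (1 - t) * \<eta> + t * (\<rho> + 2 * \<eta>)" using pp(2) yp t0
        by (intro add_mono mult_left_mono) auto
      finally show ?thesis .
    qed
    have n12: "norm (z1 - z2) \<le> (1 - t) * (2 * \<eta>) + t * s"
    proof -
      have "norm (p1 - p2) \<le> 2 * \<eta>"
        using norm_triangle_ineq[of "p1 - p" "p - p2"] pp by (simp add: norm_minus_commute)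
      then have "(1 - t) * norm (p1 - p2) \<le> (1 - t) * (2 * \<eta>)"
        using t0 by (intro mult_left_mono) auto
      moreover have "norm (z1 - z2) \<le> norm ((1 - t) *\<^sub>R (p1 - p2)) + norm (t *\<^sub>R (x - y))"
        unfolding z12 by (rule norm_triangle_ineq)
      then have "norm (z1 - z2) \<le> (1 - t) * norm (p1 - p2) + t * s"
        using t0 unfolding s_def by simp
      ultimately show ?thesis by linarith
    qed
    have teta: "t * \<eta> \<le> \<eta>" "(1 - t) * \<eta> \<le> \<eta>" using t0 eta(1) by (simp_all add: mult_left_le_one_le)
    have bz1: "norm z1 \<le> N"
    proof -
      have "norm z1 \<le> norm p + norm (z1 - p)" using norm_triangle_ineq[of p "z1 - p"] by simp
      then show ?thesis using n1 tr teta N eta unfolding L_def by linarith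
    qed
    have bz2: "norm z2 \<le> N"
    proof -
      have "norm z2 \<le> norm p + norm (z2 - p)" using norm_triangle_ineq[of p "z2 - p"] by simp
      moreover have "t * (\<rho> + 2 * \<eta>) = L + 2 * (t * \<eta>)" using tr by (simp add: algebra_simps)
      ultimately show ?thesis using n2 teta N eta unfolding L_def by linarith
    qed
    have dU: "infdist z1 U \<le> \<eta>" using cl1 z1S bz1 by blast
    have "infdist z1 V \<le> infdist z2 V + dist z1 z2" by (rule infdist_triangle)
    also have "\<dots> \<le> \<eta> + norm (z1 - z2)" using cl2 z2S bz2 by (simp add: dist_norm)
    finally have dV: "infdist z1 V \<le> \<delta>" using n12 teta ts eta by linarith
    have "max (infdist z1 U) (infdist z1 V) \<le> \<delta>" using dU dV eta by simp
    then have "infdist z1 C \<le> 1" using reg(1) by blast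
    then obtain c where c: "c \<in> C" "dist z1 c < 2" using infdist_approx[OF C(1), of z1 2] by auto
    have "norm (z1 - p) \<le> dist z1 c + norm (c - p)"
      using norm_triangle_ineq[of "z1 - c" "c - p"] by (simp add: dist_norm)
    moreover have "norm (c - p) \<le> Dc" using C(2) c(1) by blast
    ultimately have "norm (z1 - p) < 2 + Dc" using c(2) by linarith
    then show False using n1' tr teta eta unfolding L_def by linarith
  qed
  have firm: "(norm (y - p2))\<^sup>2 + s\<^sup>2 \<le> (norm (x - p2))\<^sup>2"
    using metric_proj_firm[OF S2, of x] unfolding y_def s_def by simp
  have k0: "0 \<le> \<kappa>" unfolding \<kappa>_def using reg(2) L0 by simp
  have "(\<kappa> * \<rho>)\<^sup>2 \<le> s\<^sup>2" using sk k0 rho L0 by (intro power_mono) auto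
  moreover have "4 * \<eta> * \<rho> \<le> (\<kappa> * \<rho>)\<^sup>2"
  proof -
    have "4 * \<eta> \<le> \<kappa>\<^sup>2" using eta(4) unfolding \<kappa>_def L_def .
    then have "4 * \<eta> * \<rho> \<le> \<kappa>\<^sup>2 * \<rho>" using rho L0 by (simp add: mult_right_mono)
    also have "\<dots> \<le> \<kappa>\<^sup>2 * (\<rho> * \<rho>)" using rho L0 by (intro mult_left_mono) auto
    finally show ?thesis by (simp add: power2_eq_square algebra_simps)
  qed
  moreover have "(norm (x - p2))\<^sup>2 \<le> (\<rho> + \<eta>)\<^sup>2" using xp2 by (intro power_mono) auto
  ultimately have "(norm (y - p2))\<^sup>2 \<le> (\<rho> + \<eta>)\<^sup>2 - 4 * \<eta> * \<rho>" using firm by linarith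
  also have "\<dots> = (\<rho> - \<eta>)\<^sup>2" by (simp add: power2_eq_square algebra_simps)
  finally have sq: "(norm (y - p2))\<^sup>2 \<le> (\<rho> - \<eta>)\<^sup>2" .
  have "0 \<le> \<rho> - \<eta>" using rho eta L0 by linarith
  then have "norm (y - p2) \<le> \<rho> - \<eta>" using power2_le_imp_le[OF sq] by blast
  then have "norm (y - p) \<le> \<rho>"
    using norm_triangle_ineq[of "y - p2" "p2 - p"] pp(2) by simp
  then show ?thesis unfolding y_def \<rho>_def .
qed



lemma step_conv:
  fixes x :: "'a::{real_inner,complete_space}"
  assumes S2: "closed S2" "convex S2" "S2 \<noteq> {}"
    and C: "C \<noteq> {}"
    and dx: "infdist x U \<le> \<eta>" and dy: "infdist (metric_proj S2 x) V \<le> \<eta>"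
    and cc: "\<forall>c\<in>C. \<exists>c'\<in>S2. dist c c' \<le> \<eta>"
    and reg: "\<forall>z. max (infdist z U) (infdist z V) \<le> \<delta> \<longrightarrow> infdist z C \<le> \<epsilon>" "0 < \<delta>" "\<delta> \<le> 1"
    and Q: "infdist x C \<le> Q - 1" "1 \<le> Q"
    and eta: "0 < \<eta>" "\<eta> \<le> 1/2" "\<eta> \<le> \<delta>/2" "\<eta> \<le> \<delta>\<^sup>2/(48*Q)"
  shows "infdist (metric_proj S2 x) C \<le> infdist x C + 3*\<eta>"
    and "\<epsilon> < infdist x C \<Longrightarrow> infdist (metric_proj S2 x) C \<le> infdist x C - \<delta>\<^sup>2/(16*Q)"
proof -
  define D where "D = infdist x C"
  define y where "y = metric_proj S2 x"
  define s where "s = norm (x - y)"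
  obtain c where c: "c \<in> C" "dist x c < D + \<eta>"
    using infdist_approx[OF C, of x "D + \<eta>"] eta(1) unfolding D_def by auto
  obtain c' where c': "c' \<in> S2" "dist c c' \<le> \<eta>" using cc c(1) by blast
  define a where "a = norm (x - c')"
  have a: "a < D + 2 * \<eta>"
  proof -
    have "a \<le> dist x c + dist c c'" unfolding a_def using dist_triangle[of x c' c] by (simp add: dist_norm)
    then show ?thesis using c c' by linarith
  qed
  have a0: "0 \<le> a" unfolding a_def by simp
  have firm: "(norm (y - c'))\<^sup>2 + s\<^sup>2 \<le> a\<^sup>2"
    using metric_proj_firm[OF S2 c'(1), of x] unfolding y_def s_def a_def by simp
  have yc': "norm (y - c') \<le> a"
    using firm a0 zero_le_power2[of s] power2_le_imp_le[of "norm (y - c')" a] by linarith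
  have Dy: "infdist y C \<le> norm (y - c') + \<eta>"
  proof -
    have "infdist y C \<le> dist y c" using c(1) by (rule infdist_le)
    also have "\<dots> \<le> dist y c' + dist c' c" by (rule dist_triangle)
    finally show ?thesis using c'(2) dist_commute[of c c'] dist_commute[of y c'] by (simp add: dist_norm)
  qed
  show "infdist (metric_proj S2 x) C \<le> infdist x C + 3*\<eta>"
    using Dy yc' a unfolding y_def D_def by linarith
  assume eD: "\<epsilon> < infdist x C"
  have "\<not> max (infdist x U) (infdist x V) \<le> \<delta>" using reg(1) eD by force
  then have "\<delta> < infdist x V" using dx eta reg(2) by auto
  moreover have "infdist x V \<le> infdist y V + dist x y" by (rule infdist_triangle)
  ultimately have "\<delta> < \<eta> + s" using dy unfolding y_def s_def by (simp add: dist_norm)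
  then have sd: "\<delta>/2 \<le> s" using eta by linarith
  have s2: "\<delta>\<^sup>2/4 \<le> s\<^sup>2"
  proof -
    have "(\<delta>/2)\<^sup>2 \<le> s\<^sup>2" using sd reg(2) by (intro power_mono) auto
    then show ?thesis by (simp add: power_divide)
  qed
  define u where "u = \<delta>\<^sup>2 / (8 * Q)"
  have u0: "0 \<le> u" unfolding u_def using Q by simp
  have aQ: "a \<le> Q" using a Q eta unfolding D_def by linarith
  have "2 * a * u \<le> 2 * Q * u" using aQ u0 by (simp add: mult_right_mono)
  also have "\<dots> = \<delta>\<^sup>2/4" unfolding u_def using Q by simp
  finally have au: "2 * a * u \<le> \<delta>\<^sup>2/4" .
  have "(norm (y - c'))\<^sup>2 \<le> a\<^sup>2 - 2 * a * u" using firm s2 au by linarith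
  also have "\<dots> \<le> (a - u)\<^sup>2" by (simp add: power2_eq_square algebra_simps)
  finally have sq: "(norm (y - c'))\<^sup>2 \<le> (a - u)\<^sup>2" .
  have "\<delta>\<^sup>2/4 \<le> a\<^sup>2" using firm s2 zero_le_power2[of "norm (y - c')"] by linarith
  then have "(\<delta>/2)\<^sup>2 \<le> a\<^sup>2" by (simp add: power_divide)
  then have ad: "\<delta>/2 \<le> a" using a0 power2_le_imp_le by blast
  have "\<delta>\<^sup>2 / (8 * Q) \<le> \<delta>\<^sup>2 / 8" using Q by (intro divide_left_mono) auto
  then have "u \<le> \<delta>\<^sup>2 / 8" unfolding u_def .
  moreover have "\<delta>\<^sup>2 \<le> \<delta>" using reg(2,3) by (simp add: power2_eq_square mult_left_le_one_le)
  ultimately have "u \<le> a" using ad reg(2) by linarith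
  then have "norm (y - c') \<le> a - u" using power2_le_imp_le[OF sq] by simp
  moreover have "\<eta> \<le> u / 6" using eta(4) unfolding u_def by simp
  moreover have "u / 2 = \<delta>\<^sup>2/(16*Q)" unfolding u_def by simp
  ultimately show "infdist (metric_proj S2 x) C \<le> infdist x C - \<delta>\<^sup>2/(16*Q)"
    using Dy a unfolding y_def D_def by linarith
qed



lemma interleaved:
  fixes x :: "nat \<Rightarrow> 'a::{real_inner,complete_space}" and S T :: "nat \<Rightarrow> 'a set"
  assumes C: "C \<noteq> {}" "bounded C"
    and T: "\<And>k. C \<subseteq> T k" "\<And>k. T k \<noteq> {}"
    and reg: "\<And>\<epsilon>. \<epsilon> > 0 \<Longrightarrow> \<exists>\<delta>>0. \<forall>k z. max (infdist z (T k)) (infdist z (T (Suc k))) \<le> \<delta> \<longrightarrow> infdist z C \<le> \<epsilon>"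
    and S: "\<And>k. closed (S k) \<and> convex (S k) \<and> S k \<noteq> {}"
    and rec: "\<And>k. x (Suc k) = metric_proj (S (Suc k)) (x k)"
    and aw: "\<And>N \<eta>. N \<ge> 1 \<Longrightarrow> \<eta> > 0 \<Longrightarrow> \<exists>k0. \<forall>k\<ge>k0. aw_dist N (S k) (T k) < \<eta>"
  shows "(\<lambda>k. infdist (x k) C) \<longlonglongrightarrow> 0"
proof -
  have Sc: "closed (S k)" "convex (S k)" "S k \<noteq> {}" for k using S by auto
  have xin: "x k \<in> S k" if "k \<ge> 1" for k
  proof -
    have k: "k = Suc (k - 1)" using that by simp
    show ?thesis using rec[of "k - 1"] metric_proj(1)[OF Sc, of k "x (k - 1)"] k by simp
  qed
  obtain p where pC: "p \<in> C" using C(1) by blast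
  obtain Dc where Dc: "\<forall>c\<in>C. norm (c - p) \<le> Dc"
    using C(2) unfolding bounded_any_center[of C p] by (auto simp: dist_norm norm_minus_commute)
  have Dc0: "0 \<le> Dc" using Dc pC norm_ge_zero order_trans by blast
  have closek: "(\<forall>z\<in>S k. norm z \<le> real N \<longrightarrow> infdist z (T k) \<le> \<eta>) \<and>
      (\<forall>w\<in>T k. norm w \<le> real N \<longrightarrow> (\<exists>w'\<in>S k. dist w w' \<le> \<eta>))"
    if "aw_dist N (S k) (T k) < \<eta>" for N k \<eta>
    using aw_close[OF that Sc(3) T(2)] by blast
  obtain \<delta>1 where d1: "\<delta>1 > 0" "\<forall>k z. max (infdist z (T k)) (infdist z (T (Suc k))) \<le> \<delta>1 \<longrightarrow> infdist z C \<le> 1"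
    using reg[of 1] by auto
  define N1 :: nat where "N1 = nat \<lceil>norm p + Dc + 5\<rceil> + 1"
  have N1: "norm p + Dc + 5 \<le> real N1" "1 \<le> N1" unfolding N1_def by linarith+
  define \<eta>1 where "\<eta>1 = min (1/4) (min (\<delta>1/6) ((\<delta>1/(2*(Dc+3)))\<^sup>2/4))"
  have e1: "0 < \<eta>1" "\<eta>1 \<le> 1/4" "\<eta>1 \<le> \<delta>1/6" "4*\<eta>1 \<le> (\<delta>1/(2*(Dc+3)))\<^sup>2"
    unfolding \<eta>1_def using d1(1) Dc0 by auto
  obtain k0 where k0: "\<forall>k\<ge>k0. aw_dist N1 (S k) (T k) < \<eta>1" using aw[OF N1(2) e1(1)] by blast
  define K0 where "K0 = max k0 1"
  have pn1: "norm p \<le> real N1" using N1 Dc0 by linarith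
  have step1: "norm (x (Suc k) - p) \<le> max (norm (x k - p)) (Dc + 5)" if "k \<ge> K0" for k
  proof -
    have c1: "\<forall>z\<in>S k. norm z \<le> real N1 \<longrightarrow> infdist z (T k) \<le> \<eta>1"
      "\<forall>w\<in>T k. norm w \<le> real N1 \<longrightarrow> (\<exists>w'\<in>S k. dist w w' \<le> \<eta>1)"
      using closek[of N1 k \<eta>1] k0 that unfolding K0_def by auto
    have c2: "\<forall>z\<in>S (Suc k). norm z \<le> real N1 \<longrightarrow> infdist z (T (Suc k)) \<le> \<eta>1"
      "\<forall>w\<in>T (Suc k). norm w \<le> real N1 \<longrightarrow> (\<exists>w'\<in>S (Suc k). dist w w' \<le> \<eta>1)"
      using closek[of N1 "Suc k" \<eta>1] k0 that unfolding K0_def by auto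
    obtain p1 where p1: "p1 \<in> S k" "dist p p1 \<le> \<eta>1" using c1(2) pC T(1) pn1 by blast
    obtain p2 where p2: "p2 \<in> S (Suc k)" "dist p p2 \<le> \<eta>1" using c2(2) pC T(1) pn1 by blast
    have pp: "norm (p1 - p) \<le> \<eta>1" "norm (p2 - p) \<le> \<eta>1"
      using p1(2) p2(2) by (simp_all add: dist_norm norm_minus_commute)
    have xk: "x k \<in> S k" using xin that unfolding K0_def by auto
    show ?thesis
    proof (cases "Dc + 4 \<le> norm (x k - p)")
      case True
      have "norm (metric_proj (S (Suc k)) (x k) - p) \<le> norm (x k - p)"
        by (rule step_far[OF Sc(2) xk p1(1) Sc(1,2,3) p2(1) C(1) Dc, of "T k" "T (Suc k)" \<delta>1 N1 \<eta>1])
          (use d1 c1 c2 pp N1 e1 True in auto)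
      then show ?thesis using rec[of k] by simp
    next
      case False
      have "norm (metric_proj (S (Suc k)) (x k) - p) \<le> norm (x k - p) + 2 * \<eta>1"
        by (rule step_near[OF Sc(1,2,3) p2(1) pp(2)])
      then show ?thesis using rec[of k] False e1 by simp
    qed
  qed
  define Mb where "Mb = max (norm (x K0 - p)) (Dc + 5)"
  have bnd: "norm (x k - p) \<le> Mb" if "k \<ge> K0" for k
    using that
  proof (induction k rule: dec_induct)
    case base
    then show ?case unfolding Mb_def by simp
  next
    case (step n)
    then show ?case using step1[of n] unfolding Mb_def by auto
  qed
  have Mb5: "Dc + 5 \<le> Mb" unfolding Mb_def by simp
  define Q where "Q = Mb + 1"
  have Q1: "1 \<le> Q" using Mb5 Dc0 unfolding Q_def by simp
  define N2 :: nat where "N2 = nat \<lceil>Mb + norm p + Dc\<rceil> + 1"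
  have N2: "Mb + norm p + Dc \<le> real N2" "1 \<le> N2" unfolding N2_def by linarith+
  have xN2: "norm (x k) \<le> real N2" if "k \<ge> K0" for k
  proof -
    have "norm (x k) \<le> norm (x k - p) + norm p" using norm_triangle_ineq[of "x k - p" p] by simp
    then show ?thesis using bnd[OF that] N2 Dc0 by linarith
  qed
  have cN2: "norm c \<le> real N2" if "c \<in> C" for c
  proof -
    have "norm c \<le> norm (c - p) + norm p" using norm_triangle_ineq[of "c - p" p] by simp
    then show ?thesis using Dc that N2 Mb5 Dc0 by fastforce
  qed
  have DQ: "infdist (x k) C \<le> Q - 1" if "k \<ge> K0" for k
  proof -
    have "infdist (x k) C \<le> dist (x k) p" using pC by (rule infdist_le)
    then show ?thesis using bnd[OF that] unfolding Q_def by (simp add: dist_norm)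
  qed
  have main: "\<exists>K. \<forall>k\<ge>K. infdist (x k) C \<le> \<epsilon>" if eps: "\<epsilon> > 0" for \<epsilon>
  proof -
    obtain \<delta> where d: "\<delta> > 0" "\<forall>k z. max (infdist z (T k)) (infdist z (T (Suc k))) \<le> \<delta> \<longrightarrow> infdist z C \<le> \<epsilon>/2"
      using reg[of "\<epsilon>/2"] eps by auto
    define \<delta>' where "\<delta>' = min \<delta> 1"
    have d': "0 < \<delta>'" "\<delta>' \<le> 1" "\<forall>k z. max (infdist z (T k)) (infdist z (T (Suc k))) \<le> \<delta>' \<longrightarrow> infdist z C \<le> \<epsilon>/2"
      unfolding \<delta>'_def using d by auto
    define \<eta>2 where "\<eta>2 = min (1/2) (min (\<delta>'/2) (min (\<delta>'\<^sup>2/(48*Q)) (\<epsilon>/6)))"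
    have e2: "0 < \<eta>2" "\<eta>2 \<le> 1/2" "\<eta>2 \<le> \<delta>'/2" "\<eta>2 \<le> \<delta>'\<^sup>2/(48*Q)" "\<eta>2 \<le> \<epsilon>/6"
      unfolding \<eta>2_def using d'(1) Q1 eps by auto
    obtain k1 where k1: "\<forall>k\<ge>k1. aw_dist N2 (S k) (T k) < \<eta>2" using aw[OF N2(2) e2(1)] by blast
    define K1 where "K1 = max k1 K0"
    define \<beta> where "\<beta> = \<delta>'\<^sup>2/(16*Q)"
    have b0: "0 < \<beta>" unfolding \<beta>_def using d'(1) Q1 by simp
    have st: "infdist (x (Suc k)) C \<le> infdist (x k) C + 3*\<eta>2 \<and>
        (\<epsilon>/2 < infdist (x k) C \<longrightarrow> infdist (x (Suc k)) C \<le> infdist (x k) C - \<beta>)"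
      if "k \<ge> K1" for k
    proof -
      have kk: "k \<ge> K0" "k \<ge> k1" "Suc k \<ge> K0" "Suc k \<ge> k1" using that unfolding K1_def by auto
      have c1: "\<forall>z\<in>S k. norm z \<le> real N2 \<longrightarrow> infdist z (T k) \<le> \<eta>2"
        using closek[of N2 k \<eta>2] k1 kk by blast
      have c2: "\<forall>z\<in>S (Suc k). norm z \<le> real N2 \<longrightarrow> infdist z (T (Suc k)) \<le> \<eta>2"
        "\<forall>w\<in>T (Suc k). norm w \<le> real N2 \<longrightarrow> (\<exists>w'\<in>S (Suc k). dist w w' \<le> \<eta>2)"
        using closek[of N2 "Suc k" \<eta>2] k1 kk by blast+
      have xk: "x k \<in> S k" and xk1: "x (Suc k) \<in> S (Suc k)"
        using xin kk unfolding K0_def by auto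
      have dx: "infdist (x k) (T k) \<le> \<eta>2" using c1 xk xN2[OF kk(1)] by blast
      have dy: "infdist (metric_proj (S (Suc k)) (x k)) (T (Suc k)) \<le> \<eta>2"
        using c2(1) xk1 xN2[OF kk(3)] rec[of k] by simp
      have cc: "\<forall>c\<in>C. \<exists>c'\<in>S (Suc k). dist c c' \<le> \<eta>2" using c2(2) T(1) cN2 by blast
      have regk: "\<forall>z. max (infdist z (T k)) (infdist z (T (Suc k))) \<le> \<delta>' \<longrightarrow> infdist z C \<le> \<epsilon>/2"
        using d'(3) by blast
      note sc = step_conv[OF Sc(1,2,3) C(1) dx dy cc regk d'(1,2) DQ[OF kk(1)] Q1 e2(1-4)]
      show ?thesis using sc rec[of k] unfolding \<beta>_def by simp
    qed
    have "\<exists>k2\<ge>K1. infdist (x k2) C \<le> \<epsilon>/2"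
    proof (rule ccontr)
      assume "\<not> ?thesis"
      then have big: "\<forall>k\<ge>K1. \<epsilon>/2 < infdist (x k) C" by force
      have dec: "infdist (x (K1 + j)) C \<le> infdist (x K1) C - real j * \<beta>" for j
      proof (induction j)
        case 0 then show ?case by simp
      next
        case (Suc j)
        have "infdist (x (Suc (K1 + j))) C \<le> infdist (x (K1 + j)) C - \<beta>"
          using st[of "K1 + j"] big by auto
        then show ?case using Suc.IH by (simp add: algebra_simps)
      qed
      obtain j :: nat where "infdist (x K1) C < real j * \<beta>" using reals_Archimedean3[OF b0] by blast
      then show False using dec[of j] infdist_nonneg[of "x (K1 + j)" C] by linarith
    qed
    then obtain k2 where k2: "k2 \<ge> K1" "infdist (x k2) C \<le> \<epsilon>/2" by blast
    have "infdist (x k) C \<le> \<epsilon>" if "k \<ge> k2" for k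
      using that
    proof (induction k rule: dec_induct)
      case base
      then show ?case using k2 eps by simp
    next
      case (step n)
      have nK: "n \<ge> K1" using step.hyps k2 by simp
      show ?case
      proof (cases "infdist (x n) C \<le> \<epsilon>/2")
        case True
        then show ?thesis using st[OF nK] e2(5) by linarith
      next
        case False
        then show ?thesis using st[OF nK] step.IH b0 by linarith
      qed
    qed
    then show ?thesis by blast
  qed
  show ?thesis
  proof (rule LIMSEQ_I)
    fix r :: real assume r: "0 < r"
    obtain K where K: "\<forall>k\<ge>K. infdist (x k) C \<le> r/2" using main[of "r/2"] r by auto
    have "norm (infdist (x k) C - 0) < r" if "k \<ge> K" for k
    proof -
      have "infdist (x k) C \<le> r/2" using K that by blast
      moreover have "0 \<le> infdist (x k) C" by (rule infdist_nonneg)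
      ultimately show ?thesis using r by simp
    qed
    then show "\<exists>no. \<forall>n\<ge>no. norm (infdist (x n) C - 0) < r" by blast
  qed
qed


theorem corollary4p11:
  fixes A B :: "'a::{real_inner, complete_space} set"
    and As Bs :: "nat \<Rightarrow> 'a set"
    and a b :: "nat \<Rightarrow> 'a"
  assumes "closed A" "convex A" "A \<noteq> {}"
    and "closed B" "convex B" "B \<noteq> {}"
    and "bounded (A \<inter> B)" "A \<inter> B \<noteq> {}"
    and "regular_couple A B"
    and "\<And>n. closed (As n) \<and> convex (As n) \<and> As n \<noteq> {}"
    and "\<And>n. closed (Bs n) \<and> convex (Bs n) \<and> Bs n \<noteq> {}"
    and "aw_converges As A" "aw_converges Bs B"
    and "\<And>n. n \<ge> 1 \<Longrightarrow> b n = metric_proj (Bs n) (a (n - 1))"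
    and "\<And>n. n \<ge> 1 \<Longrightarrow> a n = metric_proj (As n) (b n)"
  shows "(\<lambda>n. infdist (a n) (A \<inter> B)) \<longlonglongrightarrow> 0 \<and>
         (\<lambda>n. infdist (b n) (A \<inter> B)) \<longlonglongrightarrow> 0"
proof -
  define S where "S k = (if even k then As (k div 2) else Bs (Suc (k div 2)))" for k :: nat
  define T where "T k = (if even k then A else B)" for k :: nat
  define x where "x k = (if even k then a (k div 2) else b (Suc (k div 2)))" for k :: nat
  have rec: "x (Suc k) = metric_proj (S (Suc k)) (x k)" for k
  proof (cases "even k")
    case True
    then show ?thesis unfolding x_def S_def using assms(14)[of "Suc (k div 2)"] by simp
  next
    case False
    then show ?thesis unfolding x_def S_def using assms(15)[of "Suc (k div 2)"] by simp
  qed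
  have Sp: "closed (S k) \<and> convex (S k) \<and> S k \<noteq> {}" for k
    unfolding S_def using assms(10,11) by simp
  have TC: "A \<inter> B \<subseteq> T k" for k unfolding T_def by auto
  have Tne: "T k \<noteq> {}" for k unfolding T_def using assms(3,6) by simp
  have maxT: "max (infdist z (T k)) (infdist z (T (Suc k))) = max (infdist z A) (infdist z B)" for k z
    unfolding T_def by (auto simp: max.commute)
  have reg: "\<exists>\<delta>>0. \<forall>k z. max (infdist z (T k)) (infdist z (T (Suc k))) \<le> \<delta> \<longrightarrow> infdist z (A \<inter> B) \<le> \<epsilon>"
    if "\<epsilon> > 0" for \<epsilon>
    using assms(9) that unfolding regular_couple_def maxT by blast
  have aw: "\<exists>k0. \<forall>k\<ge>k0. aw_dist N (S k) (T k) < \<eta>" if N: "N \<ge> 1" and e: "\<eta> > 0" for N \<eta>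
  proof -
    have "(\<lambda>j. aw_dist N (As j) A) \<longlonglongrightarrow> 0" "(\<lambda>j. aw_dist N (Bs j) B) \<longlonglongrightarrow> 0"
      using assms(12,13) N unfolding aw_converges_def by auto
    then obtain na nb where na: "\<forall>n\<ge>na. norm (aw_dist N (As n) A - 0) < \<eta>"
      and nb: "\<forall>n\<ge>nb. norm (aw_dist N (Bs n) B - 0) < \<eta>"
      using LIMSEQ_D[OF _ e] by metis
    have "aw_dist N (S k) (T k) < \<eta>" if "k \<ge> 2 * (na + nb)" for k
    proof (cases "even k")
      case True
      then have "k div 2 \<ge> na" using that by auto
      then show ?thesis using na True unfolding S_def T_def by fastforce
    next
      case False
      then have "Suc (k div 2) \<ge> nb" using that by auto
      then show ?thesis using nb False unfolding S_def T_def by fastforce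
    qed
    then show ?thesis by blast
  qed
  have lim: "(\<lambda>k. infdist (x k) (A \<inter> B)) \<longlonglongrightarrow> 0"
    by (rule interleaved[OF assms(8,7) TC Tne reg Sp rec aw]) auto
  have sm1: "strict_mono (\<lambda>n::nat. 2 * n)" by (simp add: strict_mono_def)
  have sm2: "strict_mono (\<lambda>n::nat. 2 * n + 1)" by (simp add: strict_mono_def)
  have "(\<lambda>n. infdist (x (2 * n)) (A \<inter> B)) \<longlonglongrightarrow> 0"
    using LIMSEQ_subseq_LIMSEQ[OF lim sm1] by (simp add: o_def)
  moreover have "x (2 * n) = a n" for n unfolding x_def by simp
  ultimately have l1: "(\<lambda>n. infdist (a n) (A \<inter> B)) \<longlonglongrightarrow> 0" by simp
  have "(\<lambda>n. infdist (x (2 * n + 1)) (A \<inter> B)) \<longlonglongrightarrow> 0"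
    using LIMSEQ_subseq_LIMSEQ[OF lim sm2] by (simp add: o_def)
  moreover have "x (2 * n + 1) = b (Suc n)" for n unfolding x_def by simp
  ultimately have "(\<lambda>n. infdist (b (Suc n)) (A \<inter> B)) \<longlonglongrightarrow> 0" by simp
  then have l2: "(\<lambda>n. infdist (b n) (A \<inter> B)) \<longlonglongrightarrow> 0" by (rule LIMSEQ_imp_Suc)
  show ?thesis using l1 l2 by blast
qed

end
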